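(* Let $T$ be a supercritical Galton–Watson tree with finite alphabet $\mathbb{A}$. Let $(\mathscr{A}_k)_{k\in\mathbb{N}}$ be such that each $\mathscr{A}_k$ is a nonempty collection of nonempty subsets of $\mathbb{A}^k$, and define $g_{\mathscr{A}_k}(s)=\mathbb{P}(T_k^{(s)}\notin\overline{\mathscr{A}_k})$ for $s\in[0,1]$. Assume that $g_{\mathscr{A}_k}(s)\to\mathbb{P}(\text{extinction})$ as $k\to\infty$ for every $s\in(0,1)$. Then there is $K\in\mathbb{N}$ such that for every $k>K$, almost surely conditioned on nonextinction, there exist infinitely many vertices $v\in T_{(k)}$ such that the descendants tree $(T_{(k)})^v$ has an $\mathscr{A}_k$-subtree.
   Context: Trees with alphabet $\mathbb{B}$ are prefix-closed subsets of $\mathbb{B}^*$ containing the empty word; $W_S(a)=\{i\in\mathbb{B}:ai\in S\}$; $S^v=\{j:vj\in S\}$; an $\mathscr{A}$-subtree of $S$ is a tree $S'\subseteq S$ with $W_{S'}(a)\in\mathscr{A}$ for all $a\in S'$. The Galton–Watson tree with offspring distribution $W$ (random subset of $\mathbb{A}$ with $\mathbb{P}(i\in W)>0$ for all $i$) is $T_0=\{\emptyset\}$, $T_n=\{aj:a\in T_{n-1},j\in W_a\}$ with independent copies $W_a$; supercritical means $\mathbb{E}|W|>1$; extinction means some $T_n=\emptyset$. The $k$-compressed tree is $T_{(k)}=\bigcup_{n\ge0}T_{kn}$, viewed as a tree with alphabet $\mathbb{A}^k$ (identifying $\mathbb{A}^{kn}$ with $(\mathbb{A}^k)^n$). $\overline{\mathscr{A}}=\{S:\exists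 X\in\mathscr{A},X\subseteq S\}$. $T_k^{(s)}=T_k\cap Y$ with $Y\subseteq\mathbb{A}^k$ independent, $\mathbb{P}(Y=B)=(1-s)^{|B|}s^{|\mathbb{A}^k\setminus B|}$. *)

theory Defs
  imports "HOL-Probability.Probability"
begin

definition is_tree :: "'b list set \<Rightarrow> bool" where
  "is_tree S \<longleftrightarrow> [] \<in> S \<and> (\<forall>u v. u @ v \<in> S \<longrightarrow> u \<in> S)"

definition children :: "'b list set \<Rightarrow> 'b list \<Rightarrow> 'b set" where
  "children S a = {i. a @ [i] \<in> S}"

definition desc_tree :: "'b list set \<Rightarrow> 'b list \<Rightarrow> 'b list set" where
  "desc_tree S v = {j. v @ j \<in> S}"

definition has_subtree :: "'b set set \<Rightarrow> 'b list set \<Rightarrow> bool" where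
  "has_subtree \<A> S \<longleftrightarrow> (\<exists>S'. is_tree S' \<and> S' \<subseteq> S \<and> (\<forall>a\<in>S'. children S' a \<in> \<A>))"

definition upclose :: "'b set set \<Rightarrow> 'b set set" where
  "upclose \<A> = {S. \<exists>X\<in>\<A>. X \<subseteq> S}"

(* sample space: a family of independent copies W_a, a \<in> 'a list *)
definition gw_space :: "'a set pmf \<Rightarrow> ('a list \<Rightarrow> 'a set) measure" where
  "gw_space W = PiM UNIV (\<lambda>_. measure_pmf W)"

fun gw_level :: "('a list \<Rightarrow> 'a set) \<Rightarrow> nat \<Rightarrow> 'a list set" where
  "gw_level \<omega> 0 = {[]}"
| "gw_level \<omega> (Suc n) = {a @ [j] | a j. a \<in> gw_level \<omega> n \<and> j \<in> \<omega> a}"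

definition extinct :: "('a list \<Rightarrow> 'a set) \<Rightarrow> bool" where
  "extinct \<omega> \<longleftrightarrow> (\<exists>n. gw_level \<omega> n = {})"

(* T_(k) = \<Union>_n T_{kn}, as a tree over alphabet A^k (words of length k),
   identifying A^{kn} with (A^k)^n *)
definition compressed_tree :: "nat \<Rightarrow> ('a list \<Rightarrow> 'a set) \<Rightarrow> 'a list list set" where
  "compressed_tree k \<omega> =
     {ws. (\<forall>w\<in>set ws. length w = k) \<and> concat ws \<in> gw_level \<omega> (k * length ws)}"

(* law of Y \<subseteq> A^k: each word kept independently with probability 1 - s,
   so P(Y = B) = (1-s)^|B| s^|A^k - B| *)
definition thin_pmf :: "nat \<Rightarrow> real \<Rightarrow> 'a list set pmf" where
  "thin_pmf k s = map_pmf (\<lambda>f. {w. length w = k \<and> f w})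
      (Pi_pmf {w. length w = k} False (\<lambda>_. bernoulli_pmf (1 - s)))"

(* g_{\<A>_k}(s) = P(T_k^{(s)} \<notin> upclose \<A>_k), T_k^{(s)} = T_k \<inter> Y, Y independent *)
definition g_fun :: "'a set pmf \<Rightarrow> nat \<Rightarrow> 'a list set set \<Rightarrow> real \<Rightarrow> real" where
  "g_fun W k \<A> s = measure (gw_space W \<Otimes>\<^sub>M measure_pmf (thin_pmf k s))
      {(\<omega>, Y). gw_level \<omega> k \<inter> Y \<notin> upclose \<A>}"

end

theory Submission
  imports Defs
begin


definition sh :: "'a list \<Rightarrow> ('a list \<Rightarrow> 'a set) \<Rightarrow> ('a list \<Rightarrow> 'a set)" where
  "sh v \<omega> = (\<lambda>x. \<omega> (v @ x))"

lemma sh_Nil[simp]: "sh [] \<omega> = \<omega>" by (simp add: sh_def)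
lemma sh_append: "sh (u @ v) \<omega> = sh v (sh u \<omega>)" by (simp add: sh_def)

lemma lvl_char: "gw_level \<omega> n = {w. length w = n \<and> (\<forall>i<n. w ! i \<in> \<omega> (take i w))}"
proof (induction n)
  case 0
  then show ?case by auto
next
  case (Suc n)
  show ?case
  proof (rule set_eqI, rule iffI)
    fix w assume "w \<in> gw_level \<omega> (Suc n)"
    then obtain a j where w: "w = a @ [j]" "a \<in> gw_level \<omega> n" "j \<in> \<omega> a" by auto
    then have a: "length a = n" "\<forall>i<n. a ! i \<in> \<omega> (take i a)" using Suc by auto
    have "\<forall>i<Suc n. w ! i \<in> \<omega> (take i w)"
    proof (intro allI impI)
      fix i assume "i < Suc n"
      then consider "i < n" | "i = n" by linarith
      then show "w ! i \<in> \<omega> (take i w)"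
        by cases (use a w in \<open>auto simp: nth_append\<close>)
    qed
    then show "w \<in> {w. length w = Suc n \<and> (\<forall>i<Suc n. w ! i \<in> \<omega> (take i w))}"
      using a w by auto
  next
    fix w assume w: "w \<in> {w. length w = Suc n \<and> (\<forall>i<Suc n. w ! i \<in> \<omega> (take i w))}"
    then have l: "length w = Suc n" and P: "\<forall>i<Suc n. w ! i \<in> \<omega> (take i w)" by auto
    define a where "a = butlast w"
    have wa: "w = a @ [last w]" using l unfolding a_def
      by (metis append_butlast_last_id list.size(3) nat.simps(3))
    have la: "length a = n" using l by (simp add: a_def)
    have "\<forall>i<n. a ! i \<in> \<omega> (take i a)"
    proof (intro allI impI)
      fix i assume i: "i < n"
      have "w ! i \<in> \<omega> (take i w)" using P i by auto
      then show "a ! i \<in> \<omega> (take i a)" using i la wa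
        by (metis nth_append_left take_append take_eq_Nil2 append_Nil2 diff_is_0_eq less_imp_le_nat)
    qed
    then have "a \<in> gw_level \<omega> n" using Suc la by auto
    moreover have "last w \<in> \<omega> a"
      using P[rule_format, of n] wa la by (metis lessI nth_append_length take_append take_all order_refl take_eq_Nil2 diff_self_eq_0 append_Nil2)
    ultimately show "w \<in> gw_level \<omega> (Suc n)" using wa by auto
  qed
qed

lemma lvl_len: "w \<in> gw_level \<omega> n \<Longrightarrow> length w = n"
  by (simp add: lvl_char)

lemma lvl_local: "(\<And>u. length u < n \<Longrightarrow> \<omega> u = \<omega>' u) \<Longrightarrow> gw_level \<omega> n = gw_level \<omega>' n"
  unfolding lvl_char by (auto)

lemma lvl_shift:
  assumes "u \<in> gw_level \<omega> a" "w \<in> gw_level (sh u \<omega>) b"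
  shows "u @ w \<in> gw_level \<omega> (a + b)"
proof -
  have u: "length u = a" "\<forall>i<a. u ! i \<in> \<omega> (take i u)" using assms(1) by (auto simp: lvl_char)
  have w: "length w = b" "\<forall>i<b. w ! i \<in> \<omega> (u @ take i w)" using assms(2) by (auto simp: lvl_char sh_def)
  have "\<forall>i<a+b. (u@w) ! i \<in> \<omega> (take i (u@w))"
  proof (intro allI impI)
    fix i assume i: "i < a + b"
    show "(u@w) ! i \<in> \<omega> (take i (u@w))"
    proof (cases "i < a")
      case True then show ?thesis using u by (auto simp: nth_append)
    next
      case False
      then have "i - a < b" using i by auto
      then show ?thesis using w u False by (auto simp: nth_append)
    qed
  qed
  then show ?thesis using u w by (auto simp: lvl_char)
qed

lemma lvl_empty_mono: "gw_level \<omega> n = {} \<Longrightarrow> n \<le> m \<Longrightarrow> gw_level \<omega> m = {}"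
proof (induction m)
  case 0 then show ?case by auto
next
  case (Suc m)
  then show ?case
    by (cases "n = Suc m") auto
qed

lemma chunks:
  "length u = k * n \<Longrightarrow> \<exists>ws. length ws = n \<and> (\<forall>w\<in>set ws. length w = k) \<and> concat ws = u"
proof (induction n arbitrary: u)
  case 0 then show ?case by auto
next
  case (Suc n)
  then have "length (drop k u) = k * n" by auto
  from Suc.IH[OF this] obtain ws where "length ws = n" "\<forall>w\<in>set ws. length w = k" "concat ws = drop k u" by blast
  then show ?case using Suc.prems
    by (intro exI[of _ "take k u # ws"]) auto
qed



lemma space_gw[simp]: "space (gw_space W) = UNIV"
  by (simp add: gw_space_def space_PiM)

lemma prob_space_gw: "prob_space (gw_space W)"
  unfolding gw_space_def by (rule prob_space_PiM) (simp add: prob_space_measure_pmf)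

lemma meas_sh[measurable]: "sh v \<in> measurable (gw_space W) (gw_space W)"
  unfolding gw_space_def sh_def
  by (rule measurable_PiM_single') (auto intro: measurable_component_singleton)

lemma distr_sh: "distr (gw_space W) (gw_space W) (sh v) = gw_space W"
proof -
  have "distr (Pi\<^sub>M UNIV (\<lambda>_. measure_pmf W)) (\<Pi>\<^sub>M i\<in>UNIV. measure_pmf W) (\<lambda>\<omega>. \<lambda>n\<in>UNIV. \<omega> (v @ n))
     = (\<Pi>\<^sub>M i\<in>UNIV. measure_pmf W)"
    using distr_PiM_reindex[of UNIV "\<lambda>_. measure_pmf W" "\<lambda>n. v @ n" UNIV]
    by (simp add: prob_space_measure_pmf inj_on_def)
  moreover have "(\<lambda>\<omega>. \<lambda>n\<in>UNIV. \<omega> (v @ n)) = sh v" by (simp add: sh_def fun_eq_iff)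
  ultimately show ?thesis by (simp add: gw_space_def)
qed

lemma prob_sh:
  assumes "F \<in> sets (gw_space W)"
  shows "measure (gw_space W) (sh v -` F) = measure (gw_space W) F"
proof -
  have "measure (gw_space W) F = measure (distr (gw_space W) (gw_space W) (sh v)) F"
    by (simp add: distr_sh)
  also have "\<dots> = measure (gw_space W) (sh v -` F \<inter> space (gw_space W))"
    by (rule measure_distr) (use assms in auto)
  finally show ?thesis by simp
qed

lemma finite_PiM_all:
  assumes "finite N" "X \<subseteq> space (PiM N (\<lambda>_. measure_pmf (W :: ('a::finite) set pmf)))"
  shows "X \<in> sets (PiM N (\<lambda>_. measure_pmf W))"
proof (rule sets.countable)
  have "finite (space (PiM N (\<lambda>_. measure_pmf W)))"
    using assms(1) by (simp add: space_PiM finite_PiE)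
  then show "countable X" using assms(2) by (meson countable_finite finite_subset)
  fix a assume "a \<in> X"
  then have a: "a \<in> PiE N (\<lambda>_. UNIV)" using assms(2) by (auto simp: space_PiM)
  have "{a} = PiE N (\<lambda>i. {a i})" using a by (auto simp: PiE_iff extensional_def) (metis ext)
  also have "\<dots> \<in> sets (PiM N (\<lambda>_. measure_pmf W))"
    using assms(1) by (intro sets_PiM_I_finite) auto
  finally show "{a} \<in> sets (PiM N (\<lambda>_. measure_pmf W))" .
qed

lemma finite_short: "finite {u :: ('a::finite) list. length u < m}"
proof -
  have "{u :: 'a list. length u < m} \<subseteq> (\<Union>n<m. {u. set u \<subseteq> UNIV \<and> length u = n})" by auto
  moreover have "finite (\<Union>n<m. {u :: 'a list. set u \<subseteq> UNIV \<and> length u = n})"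
    by (intro finite_UN_I finite_lists_length_eq) auto
  ultimately show ?thesis by (rule finite_subset)
qed

lemma finite_len: "finite {u :: ('a::finite) list. length u = m}"
  using finite_lists_length_eq[of "UNIV :: 'a set" m] by simp

lemma meas_lvl: "{\<omega>. P (gw_level \<omega> m)} \<in> sets (gw_space (W :: ('a::finite) set pmf))"
proof -
  let ?N = "{u :: 'a list. length u < m}"
  let ?X = "{a \<in> space (PiM ?N (\<lambda>_. measure_pmf W)). P (gw_level a m)}"
  have "?X \<in> sets (PiM ?N (\<lambda>_. measure_pmf W))"
    by (rule finite_PiM_all[OF finite_short]) auto
  moreover have "(\<lambda>\<omega>. restrict \<omega> ?N) \<in> measurable (gw_space W) (PiM ?N (\<lambda>_. measure_pmf W))"
    unfolding gw_space_def by (rule measurable_restrict_subset) auto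
  ultimately have "(\<lambda>\<omega>. restrict \<omega> ?N) -` ?X \<inter> space (gw_space W) \<in> sets (gw_space W)"
    by (rule measurable_sets[rotated])
  moreover have "(\<lambda>\<omega>. restrict \<omega> ?N) -` ?X \<inter> space (gw_space W) = {\<omega>. P (gw_level \<omega> m)}"
  proof -
    have "gw_level (restrict \<omega> ?N) m = gw_level \<omega> m" for \<omega>
      by (rule lvl_local) auto
    then show ?thesis by (auto simp: space_PiM)
  qed
  ultimately show ?thesis by simp
qed



lemma meas_coord: "(\<lambda>\<omega>. \<omega> i) \<in> measurable (gw_space W) (measure_pmf W)"
  unfolding gw_space_def by (rule measurable_component_singleton) simp

lemma indep_coords:
  fixes W :: "'a set pmf"
  shows "prob_space.indep_vars (gw_space W) (\<lambda>_. measure_pmf W) (\<lambda>i (\<omega>::'a list \<Rightarrow> 'a set). \<omega> i) UNIV"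
proof -
  interpret P: prob_space "gw_space W" by (rule prob_space_gw)
  show ?thesis
  proof (subst P.indep_vars_iff_distr_eq_PiM)
    show "(\<lambda>\<omega>::'a list \<Rightarrow> 'a set. \<omega> i) \<in> measurable (gw_space W) (measure_pmf W)" for i :: "'a list"
      by (rule meas_coord)
    have 1: "(\<lambda>x. \<lambda>i\<in>UNIV. x i) = (\<lambda>x. x)" by (simp add: fun_eq_iff)
    have 2: "distr (gw_space W) (measure_pmf W) (\<lambda>\<omega>. \<omega> i) = measure_pmf W" for i
      unfolding gw_space_def by (rule distr_PiM_component) (auto simp: prob_space_measure_pmf)
    show "distr (gw_space W) (Pi\<^sub>M UNIV (\<lambda>_. measure_pmf W)) (\<lambda>x. \<lambda>i\<in>UNIV. x i) =
      Pi\<^sub>M UNIV (\<lambda>i. distr (gw_space W) (measure_pmf W) (\<lambda>\<omega>. \<omega> i))"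
      unfolding 1 2 by (simp add: gw_space_def distr_id2 del: distr_id)
  qed simp
qed

lemma ind:
  fixes W :: "('a::finite) set pmf"
  assumes F: "F \<in> sets (gw_space W)" and Y: "Y \<subseteq> {v. length v = m}"
  shows "measure (gw_space W) ({\<omega>. gw_level \<omega> m = T} \<inter> {\<omega>. \<forall>v\<in>{v. length v = m}. (sh v \<omega> \<in> F \<longleftrightarrow> v \<in> Y)})
     = measure (gw_space W) {\<omega>. gw_level \<omega> m = T} *
       (\<Prod>v\<in>{v. length v = m}. if v \<in> Y then measure (gw_space W) F else 1 - measure (gw_space W) F)"
proof -
  interpret P: prob_space "gw_space W" by (rule prob_space_gw)
  let ?L = "{v::'a list. length v = m}"
  let ?N = "{u::'a list. length u < m}"
  define K where "K j = (case j of None \<Rightarrow> ?N | Some v \<Rightarrow> {u. \<exists>x. u = v @ x})" for j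
  define J where "J = insert None (Some ` ?L)"
  have K_simps[simp]: "K None = ?N" "K (Some v) = {u. \<exists>x. u = v @ x}" for v by (auto simp: K_def)
  have disj: "disjoint_family_on K J"
  proof (unfold disjoint_family_on_def, intro ballI impI)
    fix i j assume ij: "i \<in> J" "j \<in> J" "i \<noteq> j"
    show "K i \<inter> K j = {}"
    proof (cases i; cases j)
      fix v w assume "i = Some v" "j = Some w"
      then show ?thesis using ij by (auto simp: J_def append_eq_append_conv)
    qed (use ij in \<open>auto simp: J_def\<close>)
  qed
  have i1: "P.indep_vars (\<lambda>j. PiM (K j) (\<lambda>_. measure_pmf W)) (\<lambda>j (\<omega>::'a list \<Rightarrow> 'a set). restrict (\<lambda>i. \<omega> i) (K j)) J"
    by (rule P.indep_vars_restrict[OF indep_coords _ disj]) auto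
  define Yf :: "'a list option \<Rightarrow> ('a list \<Rightarrow> 'a set) \<Rightarrow> ('a list \<Rightarrow> 'a set)" where "Yf j = (case j of None \<Rightarrow> (\<lambda>a. a) | Some v \<Rightarrow> (\<lambda>b x. b (v @ x)))"
    for j :: "'a list option"
  define M2 where "M2 j = (case j of None \<Rightarrow> PiM ?N (\<lambda>_. measure_pmf W) | Some v \<Rightarrow> gw_space W)"
    for j :: "'a list option"
  have Yf_simps[simp]: "Yf None = (\<lambda>a. a)" "Yf (Some v) = (\<lambda>b x. b (v @ x))" for v
    by (auto simp: Yf_def)
  have M2_simps[simp]: "M2 None = PiM ?N (\<lambda>_. measure_pmf W)" "M2 (Some v) = gw_space W" for v
    by (auto simp: M2_def)
  have i2: "P.indep_vars M2 (\<lambda>j (\<omega>::'a list \<Rightarrow> 'a set). Yf j (restrict (\<lambda>i. \<omega> i) (K j))) J"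
  proof (rule P.indep_vars_compose2[OF i1])
    fix j assume "j \<in> J"
    show "Yf j \<in> measurable (PiM (K j) (\<lambda>_. measure_pmf W)) (M2 j)"
    proof (cases j)
      case None then show ?thesis by simp
    next
      case (Some v)
      have "(\<lambda>b x. b (v @ x)) \<in> measurable (PiM {u. \<exists>x. u = v @ x} (\<lambda>_. measure_pmf W)) (PiM UNIV (\<lambda>_. measure_pmf W))"
        by (rule measurable_PiM_single') (auto intro: measurable_component_singleton)
      then show ?thesis using Some by (simp add: gw_space_def)
    qed
  qed
  define A where "A j = (case j of None \<Rightarrow> {a \<in> space (PiM ?N (\<lambda>_. measure_pmf W)). gw_level a m = T}
      | Some v \<Rightarrow> (if v \<in> Y then F else space (gw_space W) - F))" for j
  have A_simps[simp]: "A None = {a \<in> space (PiM ?N (\<lambda>_. measure_pmf W)). gw_level a m = T}"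
    "A (Some v) = (if v \<in> Y then F else space (gw_space W) - F)" for v by (auto simp: A_def)
  have finJ: "finite J" using finite_len[where 'a='a and m=m] by (simp add: J_def)
  have AJ: "A j \<in> sets (M2 j)" if "j \<in> J" for j
  proof (cases j)
    case None then show ?thesis by (simp add: finite_PiM_all[OF finite_short])
  next
    case (Some v) then show ?thesis using F sets.compl_sets[OF F] by auto
  qed
  note eq = P.indep_varsD[OF i2 _ finJ subset_refl AJ]
  have pre_None: "(\<lambda>\<omega>. Yf None (restrict (\<lambda>i. \<omega> i) (K None))) -` A None \<inter> space (gw_space W)
      = {\<omega>. gw_level \<omega> m = T}"
  proof -
    have "gw_level (restrict \<omega> ?N) m = gw_level \<omega> m" for \<omega>
      by (rule lvl_local) auto
    then show ?thesis by (auto simp: space_PiM)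
  qed
  have shv: "(\<lambda>x. restrict (\<lambda>i. \<omega> i) (K (Some v)) (v @ x)) = sh v \<omega>" for v \<omega>
    by (auto simp: sh_def fun_eq_iff)
  have pre_Some: "(\<lambda>\<omega>. Yf (Some v) (restrict (\<lambda>i. \<omega> i) (K (Some v)))) -` A (Some v) \<inter> space (gw_space W)
      = sh v -` (if v \<in> Y then F else UNIV - F)" for v
    by (simp only: Yf_simps shv) auto
  have "(\<Inter>j\<in>J. (\<lambda>\<omega>. Yf j (restrict (\<lambda>i. \<omega> i) (K j))) -` A j \<inter> space (gw_space W))
      = {\<omega>. gw_level \<omega> m = T} \<inter> (\<Inter>v\<in>?L. sh v -` (if v \<in> Y then F else UNIV - F))"
    unfolding J_def by (simp only: INT_insert image_image pre_None pre_Some)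
  also have "\<dots> = {\<omega>. gw_level \<omega> m = T} \<inter> {\<omega>. \<forall>v\<in>?L. (sh v \<omega> \<in> F \<longleftrightarrow> v \<in> Y)}"
  proof -
    have iff: "(sh v \<omega> \<in> (if v \<in> Y then F else UNIV - F)) = (sh v \<omega> \<in> F \<longleftrightarrow> v \<in> Y)" for v \<omega>
      by auto
    show ?thesis by (auto simp only: iff vimage_eq Int_iff INT_iff mem_Collect_eq)
  qed
  finally have lhs: "(\<Inter>j\<in>J. (\<lambda>\<omega>. Yf j (restrict (\<lambda>i. \<omega> i) (K j))) -` A j \<inter> space (gw_space W))
      = {\<omega>. gw_level \<omega> m = T} \<inter> {\<omega>. \<forall>v\<in>?L. (sh v \<omega> \<in> F \<longleftrightarrow> v \<in> Y)}" .
  have pv: "measure (gw_space W) (sh v -` (if v \<in> Y then F else UNIV - F))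
     = (if v \<in> Y then measure (gw_space W) F else 1 - measure (gw_space W) F)" for v
  proof (cases "v \<in> Y")
    case True then show ?thesis using prob_sh[OF F] by simp
  next
    case False
    have "UNIV - F \<in> sets (gw_space W)" using F by (metis sets.compl_sets space_gw)
    then have "measure (gw_space W) (sh v -` (UNIV - F)) = measure (gw_space W) (UNIV - F)"
      by (rule prob_sh)
    also have "\<dots> = 1 - measure (gw_space W) F" using P.prob_compl[OF F] by simp
    finally show ?thesis using False by simp
  qed
  have pJ: "(\<Prod>j\<in>J. f j) = f None * (\<Prod>v\<in>?L. f (Some v))" for f :: "'a list option \<Rightarrow> real"
    unfolding J_def by (subst prod.insert) (auto simp: prod.reindex finite_len)
  have "(\<Prod>j\<in>J. measure (gw_space W) ((\<lambda>\<omega>. Yf j (restrict (\<lambda>i. \<omega> i) (K j))) -` A j \<inter> space (gw_space W)))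
      = measure (gw_space W) {\<omega>. gw_level \<omega> m = T} *
       (\<Prod>v\<in>?L. if v \<in> Y then measure (gw_space W) F else 1 - measure (gw_space W) F)"
    by (simp only: pJ pre_None pre_Some pv)
  with eq lhs show ?thesis unfolding J_def by simp
qed



definition wt :: "'b set \<Rightarrow> real \<Rightarrow> 'b set \<Rightarrow> real" where
  "wt L s Y = (\<Prod>v\<in>L. if v \<in> Y then 1 - s else s)"

lemma sets_sh: "F \<in> sets (gw_space W) \<Longrightarrow> {\<omega>. sh v \<omega> \<in> F} \<in> sets (gw_space W)"
  using measurable_sets[OF meas_sh, of F W v] by (simp add: vimage_def)

lemma gen_omega:
  fixes W :: "('a::finite) set pmf" and m :: nat
  assumes F: "F \<in> sets (gw_space W)"
  defines "L \<equiv> {v::'a list. length v = m}"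
  shows "{\<omega>. \<Phi> (gw_level \<omega> m) {v. length v = m \<and> sh v \<omega> \<in> F}} \<in> sets (gw_space W)"
    and "measure (gw_space W) {\<omega>. \<Phi> (gw_level \<omega> m) {v. length v = m \<and> sh v \<omega> \<in> F}}
       = (\<Sum>T\<in>Pow L. \<Sum>Y\<in>Pow L. if \<Phi> T Y then measure (gw_space W) {\<omega>. gw_level \<omega> m = T}
             * wt L (1 - measure (gw_space W) F) Y else 0)"
proof -
  interpret P: prob_space "gw_space W" by (rule prob_space_gw)
  have finL: "finite L" unfolding L_def by (rule finite_len)
  have Lne: "L \<noteq> {}" unfolding L_def by (metis (mono_tags) length_replicate mem_Collect_eq empty_iff)
  have compl: "\<And>A. A \<in> sets (gw_space W) \<Longrightarrow> UNIV - A \<in> sets (gw_space W)"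
    by (metis sets.compl_sets space_gw)
  define B where "B TY = {\<omega>. gw_level \<omega> m = fst TY} \<inter> {\<omega>. \<forall>v\<in>L. (sh v \<omega> \<in> F \<longleftrightarrow> v \<in> snd TY)}" for TY
  have Bsets: "B TY \<in> sets (gw_space W)" for TY
  proof -
    have "{\<omega>. \<forall>v\<in>L. (sh v \<omega> \<in> F \<longleftrightarrow> v \<in> snd TY)} = (\<Inter>v\<in>L. if v \<in> snd TY then {\<omega>. sh v \<omega> \<in> F} else UNIV - {\<omega>. sh v \<omega> \<in> F})"
      by auto
    also have "\<dots> \<in> sets (gw_space W)"
      using finL sets_sh[OF F] compl Lne by (intro sets.finite_INT) auto
    finally show ?thesis unfolding B_def using meas_lvl by (intro sets.Int) auto
  qed
  define I where "I = {TY \<in> Pow L \<times> Pow L. \<Phi> (fst TY) (snd TY)}"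
  have SU: "{\<omega>. \<Phi> (gw_level \<omega> m) {v. length v = m \<and> sh v \<omega> \<in> F}} = (\<Union>TY\<in>I. B TY)"
  proof (rule set_eqI, rule iffI)
    fix \<omega> assume "\<omega> \<in> {\<omega>. \<Phi> (gw_level \<omega> m) {v. length v = m \<and> sh v \<omega> \<in> F}}"
    moreover have "gw_level \<omega> m \<subseteq> L" using lvl_len unfolding L_def by blast
    ultimately show "\<omega> \<in> (\<Union>TY\<in>I. B TY)"
      unfolding I_def B_def L_def by (intro UN_I[of "(gw_level \<omega> m, {v. length v = m \<and> sh v \<omega> \<in> F})"]) auto
  next
    fix \<omega> assume "\<omega> \<in> (\<Union>TY\<in>I. B TY)"
    then obtain T Y where "(T, Y) \<in> I" "\<omega> \<in> B (T, Y)" by auto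
    moreover then have "{v. length v = m \<and> sh v \<omega> \<in> F} = Y" unfolding I_def B_def L_def by auto
    ultimately show "\<omega> \<in> {\<omega>. \<Phi> (gw_level \<omega> m) {v. length v = m \<and> sh v \<omega> \<in> F}}"
      unfolding I_def B_def by auto
  qed
  have finI: "finite I" unfolding I_def using finL by auto
  have disj: "disjoint_family_on B I"
    unfolding disjoint_family_on_def B_def I_def by (auto simp: Pow_def set_eq_iff)
  show "{\<omega>. \<Phi> (gw_level \<omega> m) {v. length v = m \<and> sh v \<omega> \<in> F}} \<in> sets (gw_space W)"
    unfolding SU using finI Bsets by (intro sets.finite_UN) auto
  have "measure (gw_space W) {\<omega>. \<Phi> (gw_level \<omega> m) {v. length v = m \<and> sh v \<omega> \<in> F}} = (\<Sum>TY\<in>I. measure (gw_space W) (B TY))"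
    unfolding SU using finI Bsets disj by (intro P.finite_measure_finite_Union) auto
  also have "\<dots> = (\<Sum>TY\<in>Pow L \<times> Pow L. if \<Phi> (fst TY) (snd TY) then measure (gw_space W) (B TY) else 0)"
    unfolding I_def using finL by (subst sum.inter_filter[symmetric]) auto
  also have "\<dots> = (\<Sum>T\<in>Pow L. \<Sum>Y\<in>Pow L. if \<Phi> T Y then measure (gw_space W) (B (T, Y)) else 0)"
    by (subst sum.cartesian_product) (rule sum.cong, auto)
  also have "\<dots> = (\<Sum>T\<in>Pow L. \<Sum>Y\<in>Pow L. if \<Phi> T Y then measure (gw_space W) {\<omega>. gw_level \<omega> m = T}
             * wt L (1 - measure (gw_space W) F) Y else 0)"
  proof (intro sum.cong refl)
    fix T Y assume "Y \<in> Pow L"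
    then have "measure (gw_space W) (B (T, Y)) = measure (gw_space W) {\<omega>. gw_level \<omega> m = T} * wt L (1 - measure (gw_space W) F) Y"
    proof -
      have "(\<Prod>v\<in>L. if v \<in> Y then measure (gw_space W) F else 1 - measure (gw_space W) F) = wt L (1 - measure (gw_space W) F) Y"
        unfolding wt_def by (rule prod.cong) auto
      then show ?thesis unfolding B_def using ind[OF F, of Y m T] \<open>Y \<in> Pow L\<close> by (simp add: L_def)
    qed
    then show "(if \<Phi> T Y then measure (gw_space W) (B (T, Y)) else 0) = (if \<Phi> T Y then measure (gw_space W) {\<omega>. gw_level \<omega> m = T}
             * wt L (1 - measure (gw_space W) F) Y else 0)" by simp
  qed
  finally show "measure (gw_space W) {\<omega>. \<Phi> (gw_level \<omega> m) {v. length v = m \<and> sh v \<omega> \<in> F}}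
       = (\<Sum>T\<in>Pow L. \<Sum>Y\<in>Pow L. if \<Phi> T Y then measure (gw_space W) {\<omega>. gw_level \<omega> m = T}
             * wt L (1 - measure (gw_space W) F) Y else 0)" .
qed



lemma set_thin: "set_pmf (thin_pmf k s) \<subseteq> Pow {w. length w = k}"
  unfolding thin_pmf_def by auto

lemma pmf_thin:
  assumes s: "0 \<le> s" "s \<le> 1" and Y: "Y \<subseteq> {w::'a::finite list. length w = k}"
  shows "pmf (thin_pmf k s) Y = wt {w. length w = k} s Y"
proof -
  let ?L = "{w::'a list. length w = k}"
  let ?P = "Pi_pmf ?L False (\<lambda>_. bernoulli_pmf (1 - s))"
  let ?g = "\<lambda>f. {w. length w = k \<and> f w}"
  let ?c = "\<lambda>w. w \<in> Y"
  have sub: "set_pmf ?P \<subseteq> {f. \<forall>x. x \<notin> ?L \<longrightarrow> f x = False}"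
    by (rule set_Pi_pmf_subset) (rule finite_len)
  have "?g -` {Y} \<inter> set_pmf ?P = {?c} \<inter> set_pmf ?P"
  proof (rule set_eqI, rule iffI)
    fix f assume f: "f \<in> ?g -` {Y} \<inter> set_pmf ?P"
    then have "\<forall>x. x \<notin> ?L \<longrightarrow> f x = False" using sub by auto
    moreover have "{w. length w = k \<and> f w} = Y" using f by auto
    ultimately have "f = ?c" using Y by (auto simp: fun_eq_iff)
    then show "f \<in> {?c} \<inter> set_pmf ?P" using f by auto
  next
    fix f assume "f \<in> {?c} \<inter> set_pmf ?P"
    then show "f \<in> ?g -` {Y} \<inter> set_pmf ?P" using Y by auto
  qed
  have "pmf (thin_pmf k s) Y = measure ?P (?g -` {Y})"
    unfolding thin_pmf_def by (rule pmf_map)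
  also have "\<dots> = measure ?P (?g -` {Y} \<inter> set_pmf ?P)" by (simp add: measure_Int_set_pmf)
  also have "\<dots> = measure ?P ({?c} \<inter> set_pmf ?P)" by (simp only: \<open>?g -` {Y} \<inter> set_pmf ?P = {?c} \<inter> set_pmf ?P\<close>)
  also have "\<dots> = pmf ?P ?c" by (simp add: measure_Int_set_pmf measure_pmf_single)
  also have "\<dots> = (\<Prod>x\<in>?L. pmf (bernoulli_pmf (1 - s)) (?c x))"
    by (rule pmf_Pi') (use Y finite_len in auto)
  also have "\<dots> = wt ?L s Y"
    unfolding wt_def by (rule prod.cong) (use s in auto)
  finally show ?thesis .
qed

lemma measure_thin:
  assumes s: "0 \<le> s" "s \<le> 1"
  shows "measure (thin_pmf k s) S = (\<Sum>Y\<in>Pow {w::'a::finite list. length w = k}. if Y \<in> S then wt {w. length w = k} s Y else 0)"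
proof -
  let ?L = "{w::'a list. length w = k}"
  have "measure (thin_pmf k s) S = measure (thin_pmf k s) (S \<inter> set_pmf (thin_pmf k s))"
    by (simp add: measure_Int_set_pmf)
  also have "S \<inter> set_pmf (thin_pmf k s) = (S \<inter> Pow ?L) \<inter> set_pmf (thin_pmf k s)"
    using set_thin by blast
  also have "measure (thin_pmf k s) \<dots> = measure (thin_pmf k s) (S \<inter> Pow ?L)"
    by (simp add: measure_Int_set_pmf)
  also have "\<dots> = sum (pmf (thin_pmf k s)) (S \<inter> Pow ?L)"
    by (rule measure_measure_pmf_finite) (simp add: finite_len)
  also have "\<dots> = (\<Sum>Y\<in>Pow ?L. if Y \<in> S then wt ?L s Y else 0)"
  proof -
    have "sum (pmf (thin_pmf k s)) (S \<inter> Pow ?L) = sum (wt ?L s) (S \<inter> Pow ?L)"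
      by (rule sum.cong) (auto simp: pmf_thin[OF s])
    also have "\<dots> = (\<Sum>Y\<in>Pow ?L. if Y \<in> S then wt ?L s Y else 0)"
      by (simp only: sum.If_cases[OF finite_Pow_iff[THEN iffD2, OF finite_len]] sum.neutral_const add_0_right)
        (rule sum.cong, auto)
    finally show ?thesis .
  qed
  finally show ?thesis .
qed

lemma meas_times:
  assumes "prob_space M" "prob_space N" "A \<in> sets M" "B \<in> sets N"
  shows "measure (M \<Otimes>\<^sub>M N) (A \<times> B) = measure M A * measure N B"
proof -
  interpret M: prob_space M by fact
  interpret N: prob_space N by fact
  show ?thesis unfolding measure_def
    using N.emeasure_pair_measure_Times[of A M B] assms(3,4) by (simp add: enn2real_mult)
qed

lemma mult_if_0: "x * (if c then a else 0) = (if c then x * a else (0::real))" by simp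

lemma gen_thin:
  fixes W :: "('a::finite) set pmf" and k :: nat
  assumes s: "0 \<le> s" "s \<le> 1"
  defines "L \<equiv> {v::'a list. length v = k}"
  shows "{(\<omega>, Y). \<Psi> (gw_level \<omega> k) Y} \<in> sets (gw_space W \<Otimes>\<^sub>M measure_pmf (thin_pmf k s))"
    and "measure (gw_space W \<Otimes>\<^sub>M measure_pmf (thin_pmf k s)) {(\<omega>, Y). \<Psi> (gw_level \<omega> k) Y}
       = (\<Sum>T\<in>Pow L. \<Sum>Y\<in>Pow L. if \<Psi> T Y then measure (gw_space W) {\<omega>. gw_level \<omega> k = T} * wt L s Y else 0)"
proof -
  let ?M = "gw_space W \<Otimes>\<^sub>M measure_pmf (thin_pmf k s)"
  interpret P: prob_space "gw_space W" by (rule prob_space_gw)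
  interpret Q: prob_space ?M by (intro prob_space_pair prob_space_gw prob_space_measure_pmf)
  have finL: "finite L" unfolding L_def by (rule finite_len)
  define B where "B T = {\<omega>. gw_level \<omega> k = T} \<times> {Y. \<Psi> T Y}" for T
  have Bs: "B T \<in> sets ?M" for T unfolding B_def by (intro pair_measureI meas_lvl) auto
  have SU: "{(\<omega>, Y). \<Psi> (gw_level \<omega> k) Y} = (\<Union>T\<in>Pow L. B T)"
  proof -
    have "gw_level \<omega> k \<subseteq> L" for \<omega> using lvl_len unfolding L_def by blast
    then show ?thesis unfolding B_def by auto
  qed
  show "{(\<omega>, Y). \<Psi> (gw_level \<omega> k) Y} \<in> sets ?M"
    unfolding SU using finL Bs by (intro sets.finite_UN) auto
  have "Q.prob {(\<omega>, Y). \<Psi> (gw_level \<omega> k) Y} = (\<Sum>T\<in>Pow L. Q.prob (B T))"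
    unfolding SU using finL Bs by (intro Q.finite_measure_finite_Union) (auto simp: disjoint_family_on_def B_def)
  also have "\<dots> = (\<Sum>T\<in>Pow L. P.prob {\<omega>. gw_level \<omega> k = T} * measure (thin_pmf k s) {Y. \<Psi> T Y})"
    unfolding B_def by (intro sum.cong refl meas_times prob_space_gw prob_space_measure_pmf meas_lvl) auto
  also have "\<dots> = (\<Sum>T\<in>Pow L. \<Sum>Y\<in>Pow L. if \<Psi> T Y then P.prob {\<omega>. gw_level \<omega> k = T} * wt L s Y else 0)"
    unfolding measure_thin[OF s] L_def by (simp add: sum_distrib_left mult_if_0)
  finally show "Q.prob {(\<omega>, Y). \<Psi> (gw_level \<omega> k) Y}
       = (\<Sum>T\<in>Pow L. \<Sum>Y\<in>Pow L. if \<Psi> T Y then P.prob {\<omega>. gw_level \<omega> k = T} * wt L s Y else 0)" .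
qed



lemma wt_nonneg: "0 \<le> s \<Longrightarrow> s \<le> 1 \<Longrightarrow> 0 \<le> wt L s Y"
  unfolding wt_def by (rule prod_nonneg) auto

lemma wt_split:
  assumes "finite L" "a \<notin> L"
  shows "(\<Sum>Y\<in>Pow (insert a L). if \<Phi> Y then wt (insert a L) x Y else 0)
     = x * (\<Sum>Y\<in>Pow L. if \<Phi> Y then wt L x Y else 0) + (1 - x) * (\<Sum>Y\<in>Pow L. if \<Phi> (insert a Y) then wt L x Y else 0)"
proof -
  have d: "Pow L \<inter> insert a ` Pow L = {}" using assms(2) by auto
  have inj: "inj_on (insert a) (Pow L)" using assms(2) unfolding inj_on_def by (metis Pow_iff insert_absorb insert_ident subsetD)
  have w1: "wt (insert a L) x Y = x * wt L x Y" if "Y \<in> Pow L" for Y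
    using that assms unfolding wt_def by (subst prod.insert) auto
  have w2: "wt (insert a L) x (insert a Y) = (1 - x) * wt L x Y" if "Y \<in> Pow L" for Y
  proof -
    have "wt L x (insert a Y) = wt L x Y" unfolding wt_def using assms(2) by (intro prod.cong) auto
    then show ?thesis using assms unfolding wt_def by (subst prod.insert) auto
  qed
  have "(\<Sum>Y\<in>Pow (insert a L). if \<Phi> Y then wt (insert a L) x Y else 0)
      = (\<Sum>Y\<in>Pow L. if \<Phi> Y then wt (insert a L) x Y else 0) + (\<Sum>Y\<in>insert a ` Pow L. if \<Phi> Y then wt (insert a L) x Y else 0)"
    unfolding Pow_insert using assms(1) d by (intro sum.union_disjoint) auto
  also have "(\<Sum>Y\<in>insert a ` Pow L. if \<Phi> Y then wt (insert a L) x Y else 0)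
      = (\<Sum>Y\<in>Pow L. if \<Phi> (insert a Y) then wt (insert a L) x (insert a Y) else 0)"
    by (subst sum.reindex[OF inj]) simp
  also have "\<dots> = (1 - x) * (\<Sum>Y\<in>Pow L. if \<Phi> (insert a Y) then wt L x Y else 0)"
    unfolding sum_distrib_left by (intro sum.cong refl) (simp add: w2)
  also have "(\<Sum>Y\<in>Pow L. if \<Phi> Y then wt (insert a L) x Y else 0) = x * (\<Sum>Y\<in>Pow L. if \<Phi> Y then wt L x Y else 0)"
    unfolding sum_distrib_left by (intro sum.cong refl) (simp add: w1)
  finally show ?thesis .
qed

lemma wt_mono:
  fixes L :: "'b set"
  assumes "finite L" "\<And>Y Y'. Y \<subseteq> L \<Longrightarrow> Y' \<subseteq> Y \<Longrightarrow> \<Phi> Y \<Longrightarrow> \<Phi> Y'" and st: "0 \<le> s" "s \<le> t" "t \<le> 1"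
  shows "(\<Sum>Y\<in>Pow L. if \<Phi> Y then wt L s Y else 0) \<le> (\<Sum>Y\<in>Pow L. if \<Phi> Y then wt L t Y else 0)"
  using assms(1,2)
proof (induction L arbitrary: \<Phi> rule: finite_induct)
  case empty
  show ?case by (simp only: Pow_empty sum.insert sum.empty finite.emptyI empty_iff, simp add: wt_def)
next
  case (insert a L)
  let ?f = "\<lambda>\<Phi> x. (\<Sum>Y\<in>Pow L. if \<Phi> Y then wt L x Y else 0)"
  have IH0: "?f \<Phi> s \<le> ?f \<Phi> t"
  proof (rule insert.IH)
    fix Y Y' assume "Y \<subseteq> L" "Y' \<subseteq> Y" "\<Phi> Y"
    then show "\<Phi> Y'" using insert.prems[of Y Y'] by blast
  qed
  have IH1: "?f (\<lambda>Y. \<Phi> (insert a Y)) s \<le> ?f (\<lambda>Y. \<Phi> (insert a Y)) t"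
  proof (rule insert.IH)
    fix Y Y' assume "Y \<subseteq> L" "Y' \<subseteq> Y" "\<Phi> (insert a Y)"
    then show "\<Phi> (insert a Y')" using insert.prems[of "insert a Y" "insert a Y'"] by blast
  qed
  have le: "?f (\<lambda>Y. \<Phi> (insert a Y)) t \<le> ?f \<Phi> t"
  proof (rule sum_mono)
    fix Y assume "Y \<in> Pow L"
    then have "\<Phi> (insert a Y) \<Longrightarrow> \<Phi> Y" using insert.prems[of "insert a Y" Y] by blast
    then show "(if \<Phi> (insert a Y) then wt L t Y else 0) \<le> (if \<Phi> Y then wt L t Y else 0)"
      using wt_nonneg[of t L Y] st by auto
  qed
  have "s * ?f \<Phi> s + (1 - s) * ?f (\<lambda>Y. \<Phi> (insert a Y)) s \<le> s * ?f \<Phi> t + (1 - s) * ?f (\<lambda>Y. \<Phi> (insert a Y)) t"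
    using IH0 IH1 st by (intro add_mono mult_left_mono) auto
  also have "\<dots> \<le> t * ?f \<Phi> t + (1 - t) * ?f (\<lambda>Y. \<Phi> (insert a Y)) t"
  proof -
    have "0 \<le> (t - s) * (?f \<Phi> t - ?f (\<lambda>Y. \<Phi> (insert a Y)) t)"
      using le st by (intro mult_nonneg_nonneg) auto
    then show ?thesis by (simp add: algebra_simps)
  qed
  finally show ?case using insert.hyps by (simp add: wt_split)
qed



fun Dset :: "'a list set set \<Rightarrow> nat \<Rightarrow> nat \<Rightarrow> ('a list \<Rightarrow> 'a set) set" where
  "Dset U k 0 = UNIV"
| "Dset U k (Suc n) = {\<omega>. gw_level \<omega> k \<inter> {v. length v = k \<and> sh v \<omega> \<in> Dset U k n} \<in> upclose U}"

lemma upclose_mono: "X \<in> upclose U \<Longrightarrow> X \<subseteq> Y \<Longrightarrow> Y \<in> upclose U"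
  unfolding upclose_def by auto

lemma Dset_sets: "Dset U k n \<in> sets (gw_space (W :: ('a::finite) set pmf))"
proof (induction n)
  case 0 then show ?case by (simp add: sets.top[where M="gw_space W", simplified])
next
  case (Suc n)
  show ?case using gen_omega(1)[OF Suc, of "\<lambda>T Y. T \<inter> Y \<in> upclose U" k] by simp
qed

lemma Dset_Suc_sub: "Dset U k (Suc n) \<subseteq> Dset U k n"
proof (induction n)
  case 0 then show ?case by simp
next
  case (Suc n)
  show ?case
  proof
    fix \<omega> assume "\<omega> \<in> Dset U k (Suc (Suc n))"
    then have "gw_level \<omega> k \<inter> {v. length v = k \<and> sh v \<omega> \<in> Dset U k (Suc n)} \<in> upclose U" by simp
    moreover have "gw_level \<omega> k \<inter> {v. length v = k \<and> sh v \<omega> \<in> Dset U k (Suc n)} \<subseteq> gw_level \<omega> k \<inter> {v. length v = k \<and> sh v \<omega> \<in> Dset U k n}"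
      using Suc by auto
    ultimately show "\<omega> \<in> Dset U k (Suc n)" by (auto intro: upclose_mono)
  qed
qed

lemma Dset_decseq: "decseq (Dset U k)"
  using Dset_Suc_sub by (intro decseq_SucI) auto

lemma Dset_depth:
  assumes ne: "\<And>X. X \<in> U \<Longrightarrow> X \<noteq> {}"
  shows "\<omega> \<in> Dset U k n \<Longrightarrow> gw_level \<omega> (k * n) \<noteq> {}"
proof (induction n arbitrary: \<omega>)
  case 0 then show ?case by simp
next
  case (Suc n)
  then have "gw_level \<omega> k \<inter> {v. length v = k \<and> sh v \<omega> \<in> Dset U k n} \<in> upclose U" by simp
  then obtain X where "X \<in> U" "X \<subseteq> gw_level \<omega> k \<inter> {v. length v = k \<and> sh v \<omega> \<in> Dset U k n}"
    unfolding upclose_def by auto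
  moreover obtain v where "v \<in> X" using ne[OF \<open>X \<in> U\<close>] by auto
  ultimately have v: "v \<in> gw_level \<omega> k" "sh v \<omega> \<in> Dset U k n" by auto
  then obtain w where "w \<in> gw_level (sh v \<omega>) (k * n)" using Suc.IH by blast
  then have "v @ w \<in> gw_level \<omega> (k + k * n)" using lvl_shift[OF v(1)] by blast
  then show ?case by auto
qed

definition Hset :: "'a list set set \<Rightarrow> nat \<Rightarrow> ('a list \<Rightarrow> 'a set) set" where
  "Hset U k = (\<Inter>n. Dset U k n)"

lemma Hset_children:
  fixes \<omega> :: "('a::finite) list \<Rightarrow> 'a set"
  assumes "\<omega> \<in> Hset U k"
  shows "gw_level \<omega> k \<inter> {v. length v = k \<and> sh v \<omega> \<in> Hset U k} \<in> upclose U"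
proof -
  let ?C = "\<lambda>n. gw_level \<omega> k \<inter> {v. length v = k \<and> sh v \<omega> \<in> Dset U k n}"
  let ?L = "{v::'a list. length v = k}"
  have Cn: "?C n \<in> upclose U" for n
  proof -
    have "\<omega> \<in> Dset U k (Suc n)" using assms unfolding Hset_def by blast
    then show ?thesis by simp
  qed
  have "\<forall>v\<in>?L. \<exists>n. v \<notin> ?C n \<or> sh v \<omega> \<in> Hset U k"
  proof
    fix v
    show "\<exists>n. v \<notin> ?C n \<or> sh v \<omega> \<in> Hset U k"
    proof (cases "sh v \<omega> \<in> Hset U k")
      case True then show ?thesis by blast
    next
      case False
      then obtain n where "sh v \<omega> \<notin> Dset U k n" unfolding Hset_def by blast
      then show ?thesis by blast
    qed
  qed
  from bchoice[OF this] obtain N where N0: "\<forall>v\<in>?L. v \<notin> ?C (N v) \<or> sh v \<omega> \<in> Hset U k" by blast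
  have N: "\<And>v. v \<in> ?L \<Longrightarrow> v \<notin> ?C (N v) \<or> sh v \<omega> \<in> Hset U k" using N0 by blast
  define n0 where "n0 = Max (N ` ?L)"
  have "finite ?L" by (rule finite_len)
  then have le: "N v \<le> n0" if "v \<in> ?L" for v unfolding n0_def
    by (rule Max_ge[OF finite_imageI]) (use that in blast)
  have "?C n0 \<subseteq> gw_level \<omega> k \<inter> {v. length v = k \<and> sh v \<omega> \<in> Hset U k}"
  proof
    fix v assume v: "v \<in> ?C n0"
    then have vL: "v \<in> ?L" by auto
    have "sh v \<omega> \<in> Dset U k n0" using v by auto
    then have "sh v \<omega> \<in> Dset U k (N v)" using Dset_decseq[of U k] le[OF vL] unfolding decseq_def by blast
    then have "v \<in> ?C (N v)" using v by auto
    then have "sh v \<omega> \<in> Hset U k" using N[OF vL] by auto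
    then show "v \<in> gw_level \<omega> k \<inter> {v. length v = k \<and> sh v \<omega> \<in> Hset U k}" using v by auto
  qed
  then show ?thesis using Cn[of n0] by (rule upclose_mono[rotated])
qed



lemma snoc_mem:
  "(\<forall>i<length (ws @ [v]). (ws @ [v]) ! i \<in> f (take i (ws @ [v])))
   \<longleftrightarrow> (\<forall>i<length ws. ws ! i \<in> f (take i ws)) \<and> v \<in> f ws"
proof -
  have "(\<forall>i<Suc (length ws). (ws @ [v]) ! i \<in> f (take i (ws @ [v])))
     \<longleftrightarrow> (\<forall>i<length ws. (ws @ [v]) ! i \<in> f (take i (ws @ [v]))) \<and> (ws @ [v]) ! length ws \<in> f (take (length ws) (ws @ [v]))"
    by (auto simp: less_Suc_eq)
  also have "(\<forall>i<length ws. (ws @ [v]) ! i \<in> f (take i (ws @ [v]))) \<longleftrightarrow> (\<forall>i<length ws. ws ! i \<in> f (take i ws))"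
    by (auto simp: nth_append)
  finally show ?thesis by simp
qed

lemma Hset_subtree:
  fixes \<omega> :: "('a::finite) list \<Rightarrow> 'a set"
  assumes H: "\<omega> \<in> Hset U k"
  shows "\<exists>S'. is_tree S' \<and> S' \<subseteq> compressed_tree k \<omega> \<and> (\<forall>a\<in>S'. children S' a \<in> U)"
proof -
  define ch where "ch \<eta> = (SOME X. X \<in> U \<and> X \<subseteq> gw_level \<eta> k \<inter> {v. length v = k \<and> sh v \<eta> \<in> Hset U k})" for \<eta>
  have ch: "ch \<eta> \<in> U \<and> ch \<eta> \<subseteq> gw_level \<eta> k \<inter> {v. length v = k \<and> sh v \<eta> \<in> Hset U k}" if "\<eta> \<in> Hset U k" for \<eta>
  proof -
    have "\<exists>X. X \<in> U \<and> X \<subseteq> gw_level \<eta> k \<inter> {v. length v = k \<and> sh v \<eta> \<in> Hset U k}"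
      using Hset_children[OF that] unfolding upclose_def by auto
    then show ?thesis unfolding ch_def by (rule someI_ex)
  qed
  define f where "f ws = ch (sh (concat ws) \<omega>)" for ws
  define S' where "S' = {ws. \<forall>i<length ws. ws ! i \<in> f (take i ws)}"
  have snocS: "ws @ [v] \<in> S' \<longleftrightarrow> ws \<in> S' \<and> v \<in> f ws" for ws v
    unfolding S'_def using snoc_mem[of ws v f] by simp
  have inv: "(\<forall>w\<in>set ws. length w = k) \<and> concat ws \<in> gw_level \<omega> (k * length ws) \<and> sh (concat ws) \<omega> \<in> Hset U k"
    if "ws \<in> S'" for ws
    using that
  proof (induction ws rule: rev_induct)
    case Nil then show ?case using H by simp
  next
    case (snoc v ws)
    then have ws: "ws \<in> S'" and v: "v \<in> f ws" using snocS by auto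
    note IH = snoc.IH[OF ws]
    then have "ch (sh (concat ws) \<omega>) \<subseteq> gw_level (sh (concat ws) \<omega>) k \<inter> {v. length v = k \<and> sh v (sh (concat ws) \<omega>) \<in> Hset U k}"
      using ch by blast
    then have v2: "v \<in> gw_level (sh (concat ws) \<omega>) k" "length v = k" "sh v (sh (concat ws) \<omega>) \<in> Hset U k"
      using v unfolding f_def by auto
    have "concat ws @ v \<in> gw_level \<omega> (k * length ws + k)"
      using lvl_shift[OF conjunct1[OF conjunct2[OF IH]] v2(1)] .
    then show ?case using IH v2 by (simp add: sh_append add.commute)
  qed
  have tree: "is_tree S'"
    unfolding is_tree_def
  proof (intro conjI allI impI)
    show "[] \<in> S'" unfolding S'_def by simp
    fix u v assume "u @ v \<in> S'"
    then show "u \<in> S'" unfolding S'_def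
      by (auto simp: nth_append) (metis length_append nth_append_left take_append take_eq_Nil2 append_Nil2 diff_is_0_eq less_imp_le_nat trans_less_add1)
  qed
  have sub: "S' \<subseteq> compressed_tree k \<omega>"
    using inv unfolding compressed_tree_def by auto
  have chil: "children S' a \<in> U" if "a \<in> S'" for a
  proof -
    have "children S' a = f a" unfolding children_def using snocS that by auto
    then show ?thesis using ch inv[OF that] unfolding f_def by auto
  qed
  show ?thesis using tree sub chil by blast
qed

lemma infinite_tree:
  assumes "is_tree S" "\<And>a. a \<in> S \<Longrightarrow> children S a \<noteq> {}"
  shows "infinite S"
proof
  assume fin: "finite S"
  have "[] \<in> S" using assms(1) unfolding is_tree_def by auto
  then have ne: "length ` S \<noteq> {}" by auto
  define M where "M = Max (length ` S)"
  have "M \<in> length ` S" unfolding M_def using fin ne by (intro Max_in) auto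
  then obtain a where a: "a \<in> S" "length a = M" by auto
  then obtain i where "a @ [i] \<in> S" using assms(2)[OF a(1)] unfolding children_def by auto
  then have "length (a @ [i]) \<in> length ` S" by (rule imageI)
  then have "length (a @ [i]) \<le> M" unfolding M_def using fin by (intro Max_ge) auto
  then show False using a by simp
qed

lemma compressed_append:
  assumes "ws0 \<in> compressed_tree k \<omega>" "ws \<in> compressed_tree k (sh (concat ws0) \<omega>)"
  shows "ws0 @ ws \<in> compressed_tree k \<omega>"
proof -
  have "concat ws0 @ concat ws \<in> gw_level \<omega> (k * length ws0 + k * length ws)"
    using assms unfolding compressed_tree_def by (intro lvl_shift) auto
  then show ?thesis using assms unfolding compressed_tree_def by (auto simp: algebra_simps)
qed

lemma E_infinite:
  fixes \<omega> :: "('a::finite) list \<Rightarrow> 'a set"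
  assumes ne: "\<And>X. X \<in> U \<Longrightarrow> X \<noteq> {}"
    and ws0: "ws0 \<in> compressed_tree k \<omega>" and H: "sh (concat ws0) \<omega> \<in> Hset U k"
  shows "infinite {v \<in> compressed_tree k \<omega>. has_subtree U (desc_tree (compressed_tree k \<omega>) v)}"
proof -
  obtain S' where S': "is_tree S'" "S' \<subseteq> compressed_tree k (sh (concat ws0) \<omega>)" "\<forall>a\<in>S'. children S' a \<in> U"
    using Hset_subtree[OF H] by blast
  have inf: "infinite S'" using S' ne by (intro infinite_tree) auto
  have "(\<lambda>ws. ws0 @ ws) ` S' \<subseteq> {v \<in> compressed_tree k \<omega>. has_subtree U (desc_tree (compressed_tree k \<omega>) v)}"
  proof
    fix x assume "x \<in> (\<lambda>ws. ws0 @ ws) ` S'"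
    then obtain ws where x: "x = ws0 @ ws" and ws: "ws \<in> S'" by auto
    have "x \<in> compressed_tree k \<omega>" using compressed_append[OF ws0] S'(2) ws x by auto
    moreover have "has_subtree U (desc_tree (compressed_tree k \<omega>) x)"
      unfolding has_subtree_def
    proof (intro exI conjI)
      let ?D = "desc_tree S' ws"
      show "is_tree ?D" using S'(1) ws unfolding is_tree_def desc_tree_def
        by (metis append.assoc append_Nil2 mem_Collect_eq)
      show "?D \<subseteq> desc_tree (compressed_tree k \<omega>) x"
        unfolding desc_tree_def x using S'(2) compressed_append[OF ws0] by auto
      show "\<forall>a\<in>?D. children ?D a \<in> U"
        using S'(3) unfolding desc_tree_def children_def by auto
    qed
    ultimately show "x \<in> {v \<in> compressed_tree k \<omega>. has_subtree U (desc_tree (compressed_tree k \<omega>) v)}" by auto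
  qed
  moreover have "infinite ((\<lambda>ws. ws0 @ ws) ` S')"
    using inf by (auto dest: finite_imageD simp: inj_on_def)
  ultimately show ?thesis using finite_subset by blast
qed



definition Eset :: "'a list set set \<Rightarrow> nat \<Rightarrow> ('a list \<Rightarrow> 'a set) set" where
  "Eset U k = {\<omega>. \<exists>n. gw_level \<omega> (k * n) \<inter> {v. length v = k * n \<and> sh v \<omega> \<in> Hset U k} \<noteq> {}}"

lemma Hset_sets: "Hset U k \<in> sets (gw_space (W :: ('a::finite) set pmf))"
  unfolding Hset_def using Dset_sets by (intro sets.countable_INT') auto

lemma Eset_sets: "Eset U k \<in> sets (gw_space (W :: ('a::finite) set pmf))"
proof -
  have "Eset U k = (\<Union>n. {\<omega>. gw_level \<omega> (k * n) \<inter> {v. length v = k * n \<and> sh v \<omega> \<in> Hset U k} \<noteq> {}})"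
    unfolding Eset_def by auto
  also have "\<dots> \<in> sets (gw_space W)"
    using gen_omega(1)[OF Hset_sets, of "\<lambda>T Y. T \<inter> Y \<noteq> {}"] by (intro sets.countable_UN') auto
  finally show ?thesis .
qed

lemma Hset_Eset: "Hset U k \<subseteq> Eset U k"
proof
  fix \<omega> assume "\<omega> \<in> Hset U k"
  then have "gw_level \<omega> (k * 0) \<inter> {v. length v = k * 0 \<and> sh v \<omega> \<in> Hset U k} \<noteq> {}" by auto
  then show "\<omega> \<in> Eset U k" unfolding Eset_def by blast
qed

lemma extinct_not_Eset:
  assumes ne: "\<And>X. X \<in> U \<Longrightarrow> X \<noteq> {}" and k: "1 \<le> k" and ext: "extinct \<omega>"
  shows "\<omega> \<notin> Eset U k"
proof
  assume "\<omega> \<in> Eset U k"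
  then obtain n v where v: "v \<in> gw_level \<omega> (k * n)" "sh v \<omega> \<in> Hset U k" unfolding Eset_def by auto
  obtain n0 where n0: "gw_level \<omega> n0 = {}" using ext unfolding extinct_def by auto
  have "sh v \<omega> \<in> Dset U k n0" using v(2) unfolding Hset_def by auto
  then obtain w where "w \<in> gw_level (sh v \<omega>) (k * n0)" using Dset_depth[OF ne] by blast
  then have "v @ w \<in> gw_level \<omega> (k * n + k * n0)" using lvl_shift[OF v(1)] by blast
  moreover have "n0 \<le> k * n + k * n0" using k by (cases k) auto
  then have "gw_level \<omega> (k * n + k * n0) = {}"
    using n0 by (rule lvl_empty_mono[rotated])
  ultimately show False by auto
qed

lemma not_Eset_children:
  assumes "\<omega> \<notin> Eset U k"
  shows "gw_level \<omega> (k * n) \<inter> {v. length v = k * n \<and> sh v \<omega> \<in> Eset U k} = {}"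
proof (rule ccontr)
  assume "gw_level \<omega> (k * n) \<inter> {v. length v = k * n \<and> sh v \<omega> \<in> Eset U k} \<noteq> {}"
  then obtain v where v: "v \<in> gw_level \<omega> (k * n)" "sh v \<omega> \<in> Eset U k" by auto
  then obtain n' u where u: "u \<in> gw_level (sh v \<omega>) (k * n')" "sh u (sh v \<omega>) \<in> Hset U k"
    unfolding Eset_def by auto
  have "v @ u \<in> gw_level \<omega> (k * (n + n'))" using lvl_shift[OF v(1) u(1)] by (simp add: algebra_simps)
  moreover have "sh (v @ u) \<omega> \<in> Hset U k" using u(2) by (simp add: sh_append)
  moreover have "length (v @ u) = k * (n + n')" using calculation(1) by (rule lvl_len)
  ultimately have "\<omega> \<in> Eset U k" unfolding Eset_def by blast
  then show False using assms by simp
qed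

lemma Eset_vertex:
  assumes "\<omega> \<in> Eset U k"
  shows "\<exists>ws0 \<in> compressed_tree k \<omega>. sh (concat ws0) \<omega> \<in> Hset U k"
proof -
  obtain n u where u: "u \<in> gw_level \<omega> (k * n)" "sh u \<omega> \<in> Hset U k" using assms unfolding Eset_def by auto
  obtain ws where ws: "length ws = n" "\<forall>w\<in>set ws. length w = k" "concat ws = u"
    using chunks[OF lvl_len[OF u(1)]] by blast
  then have "ws \<in> compressed_tree k \<omega>" using u unfolding compressed_tree_def by auto
  then show ?thesis using ws u by auto
qed



lemma g_fun_sum:
  fixes W :: "('a::finite) set pmf"
  assumes s: "0 \<le> s" "s \<le> 1"
  shows "g_fun W k U s = (\<Sum>T\<in>Pow {v. length v = k}. \<Sum>Y\<in>Pow {v. length v = k}.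
     if T \<inter> Y \<notin> upclose U then measure (gw_space W) {\<omega>. gw_level \<omega> k = T} * wt {v. length v = k} s Y else 0)"
  unfolding g_fun_def using gen_thin(2)[OF s, of W k "\<lambda>T Y. T \<inter> Y \<notin> upclose U"] by simp

lemma g_mono:
  fixes W :: "('a::finite) set pmf"
  assumes st: "0 \<le> s" "s \<le> t" "t \<le> 1"
  shows "g_fun W k U s \<le> g_fun W k U t"
proof -
  let ?L = "{v::'a list. length v = k}"
  have eq: "(\<Sum>Y\<in>Pow ?L. if T \<inter> Y \<notin> upclose U then measure (gw_space W) {\<omega>. gw_level \<omega> k = T} * wt ?L x Y else 0)
    = measure (gw_space W) {\<omega>. gw_level \<omega> k = T} * (\<Sum>Y\<in>Pow ?L. if T \<inter> Y \<notin> upclose U then wt ?L x Y else 0)" for T x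
    by (simp add: sum_distrib_left mult_if_0)
  have "g_fun W k U s = (\<Sum>T\<in>Pow ?L. measure (gw_space W) {\<omega>. gw_level \<omega> k = T} * (\<Sum>Y\<in>Pow ?L. if T \<inter> Y \<notin> upclose U then wt ?L s Y else 0))"
    using st by (subst g_fun_sum) (auto simp: eq)
  also have "\<dots> \<le> (\<Sum>T\<in>Pow ?L. measure (gw_space W) {\<omega>. gw_level \<omega> k = T} * (\<Sum>Y\<in>Pow ?L. if T \<inter> Y \<notin> upclose U then wt ?L t Y else 0))"
  proof -
    have inner: "(\<Sum>Y\<in>Pow ?L. if T \<inter> Y \<notin> upclose U then wt ?L s Y else 0) \<le> (\<Sum>Y\<in>Pow ?L. if T \<inter> Y \<notin> upclose U then wt ?L t Y else 0)" for T
    proof (rule wt_mono[OF finite_len _ st])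
      fix Y Y' assume "Y' \<subseteq> Y" "T \<inter> Y \<notin> upclose U"
      then show "T \<inter> Y' \<notin> upclose U" using upclose_mono[of "T \<inter> Y'" U "T \<inter> Y"] by blast
    qed
    show ?thesis by (intro sum_mono mult_left_mono inner) auto
  qed
  also have "\<dots> = g_fun W k U t"
    using st by (subst g_fun_sum) (auto simp: eq)
  finally show ?thesis .
qed

lemma Dset_rec:
  fixes W :: "('a::finite) set pmf"
  shows "measure (gw_space W) (UNIV - Dset U k (Suc n)) = g_fun W k U (measure (gw_space W) (UNIV - Dset U k n))"
proof -
  interpret P: prob_space "gw_space W" by (rule prob_space_gw)
  have F: "Dset U k n \<in> sets (gw_space W)" by (rule Dset_sets)
  have c: "measure (gw_space W) (UNIV - Dset U k n) = 1 - measure (gw_space W) (Dset U k n)"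
    using P.prob_compl[OF F] by simp
  have "UNIV - Dset U k (Suc n) = {\<omega>. gw_level \<omega> k \<inter> {v. length v = k \<and> sh v \<omega> \<in> Dset U k n} \<notin> upclose U}"
    by auto
  then have "measure (gw_space W) (UNIV - Dset U k (Suc n)) = (\<Sum>T\<in>Pow {v. length v = k}. \<Sum>Y\<in>Pow {v. length v = k}.
     if T \<inter> Y \<notin> upclose U then measure (gw_space W) {\<omega>. gw_level \<omega> k = T} * wt {v. length v = k} (1 - measure (gw_space W) (Dset U k n)) Y else 0)"
    using gen_omega(2)[OF F, of "\<lambda>T Y. T \<inter> Y \<notin> upclose U" k] by simp
  also have "\<dots> = g_fun W k U (measure (gw_space W) (UNIV - Dset U k n))"
    unfolding c by (rule g_fun_sum[symmetric]) auto
  finally show ?thesis .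
qed

lemma Eset_bound:
  fixes W :: "('a::finite) set pmf"
  assumes ne: "\<And>X. X \<in> V \<Longrightarrow> X \<noteq> {}"
  shows "measure (gw_space W) (UNIV - Eset U k) \<le> g_fun W (k * n) V (measure (gw_space W) (UNIV - Eset U k))"
proof -
  interpret P: prob_space "gw_space W" by (rule prob_space_gw)
  let ?m = "k * n"
  let ?L = "{v::'a list. length v = ?m}"
  have F: "Eset U k \<in> sets (gw_space W)" by (rule Eset_sets)
  have c: "measure (gw_space W) (UNIV - Eset U k) = 1 - measure (gw_space W) (Eset U k)"
    using P.prob_compl[OF F] by simp
  let ?s = "1 - measure (gw_space W) (Eset U k)"
  have s: "0 \<le> ?s" "?s \<le> 1" by auto
  let ?M = "gw_space W \<Otimes>\<^sub>M measure_pmf (thin_pmf ?m ?s)"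
  interpret Q: prob_space ?M by (intro prob_space_pair prob_space_gw prob_space_measure_pmf)
  have "measure (gw_space W) (UNIV - Eset U k) \<le> measure (gw_space W) {\<omega>. gw_level \<omega> ?m \<inter> {v. length v = ?m \<and> sh v \<omega> \<in> Eset U k} = {}}"
    using not_Eset_children[of _ U k n] gen_omega(1)[OF F, of "\<lambda>T Y. T \<inter> Y = {}" ?m]
    by (intro P.finite_measure_mono) auto
  also have "\<dots> = (\<Sum>T\<in>Pow ?L. \<Sum>Y\<in>Pow ?L. if T \<inter> Y = {} then measure (gw_space W) {\<omega>. gw_level \<omega> ?m = T} * wt ?L ?s Y else 0)"
    using gen_omega(2)[OF F, of "\<lambda>T Y. T \<inter> Y = {}" ?m] by simp
  also have "\<dots> = measure ?M {(\<omega>, Y). gw_level \<omega> ?m \<inter> Y = {}}"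
    using gen_thin(2)[OF s, of W ?m "\<lambda>T Y. T \<inter> Y = {}"] by simp
  also have "\<dots> \<le> measure ?M {(\<omega>, Y). gw_level \<omega> ?m \<inter> Y \<notin> upclose V}"
  proof (rule Q.finite_measure_mono)
    show "{(\<omega>, Y). gw_level \<omega> ?m \<inter> Y = {}} \<subseteq> {(\<omega>, Y). gw_level \<omega> ?m \<inter> Y \<notin> upclose V}"
      using ne unfolding upclose_def by auto
    show "{(\<omega>, Y). gw_level \<omega> ?m \<inter> Y \<notin> upclose V} \<in> sets ?M"
      using gen_thin(1)[OF s, of "\<lambda>T Y. T \<inter> Y \<notin> upclose V" ?m W] by simp
  qed
  also have "\<dots> = g_fun W ?m V (measure (gw_space W) (UNIV - Eset U k))"
    unfolding c g_fun_def ..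
  finally show ?thesis .
qed



theorem lemma4p4:
  fixes W :: "('a::finite) set pmf"
    and \<A> :: "nat \<Rightarrow> 'a list set set"
  assumes pos: "\<And>i. measure_pmf.prob W {X. i \<in> X} > 0"
    and supercrit: "measure_pmf.expectation W (\<lambda>X. real (card X)) > 1"
    and A_ne: "\<And>k. \<A> k \<noteq> {}"
    and A_sets: "\<And>k X. X \<in> \<A> k \<Longrightarrow> X \<noteq> {} \<and> X \<subseteq> {w. length w = k}"
    and g_lim: "\<And>s. 0 < s \<Longrightarrow> s < 1 \<Longrightarrow>
       (\<lambda>k. g_fun W k (\<A> k) s) \<longlonglongrightarrow> measure (gw_space W) {\<omega>. extinct \<omega>}"
  shows "\<exists>K::nat. \<forall>k>K. AE \<omega> in gw_space W. \<not> extinct \<omega> \<longrightarrow>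
           infinite {v \<in> compressed_tree k \<omega>.
                       has_subtree (\<A> k) (desc_tree (compressed_tree k \<omega>) v)}"
proof -
  interpret P: prob_space "gw_space W" by (rule prob_space_gw)
  let ?X = "Collect extinct :: ('a list \<Rightarrow> 'a set) set"
  let ?q = "measure (gw_space W) ?X"
  have Xs: "?X \<in> sets (gw_space W)"
  proof -
    have "?X = (\<Union>n. {\<omega>. gw_level \<omega> n = {}})" unfolding extinct_def by auto
    also have "\<dots> \<in> sets (gw_space W)" using meas_lvl by (intro sets.countable_UN') auto
    finally show ?thesis .
  qed
  have compl: "\<And>A. A \<in> sets (gw_space W) \<Longrightarrow> UNIV - A \<in> sets (gw_space W)"
    by (metis sets.compl_sets space_gw)
  have null: "A \<in> null_sets (gw_space W)" if "A \<in> sets (gw_space W)" "measure (gw_space W) A = 0" for A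
    using that by (simp add: P.emeasure_eq_measure null_setsI)
  show ?thesis
  proof (cases "?q < 1")
    case False
    then have q1: "?q = 1" using P.prob_le_1[of ?X] by linarith
    have "measure (gw_space W) (UNIV - ?X) = 0" using P.prob_compl[OF Xs] q1 by simp
    then have N: "UNIV - ?X \<in> null_sets (gw_space W)" using null compl[OF Xs] by blast
    show ?thesis
      by (rule exI[of _ 0], intro allI impI AE_I'[OF N]) auto
  next
    case True
    obtain s0 where s0_def: "s0 = (1 + ?q) / 2" by blast
    have q0: "0 \<le> ?q" by simp
    have q_alt: "measure (gw_space W) (Collect extinct) = ?q" by simp
    have avg: "0 < (1 + q) / 2 \<and> (1 + q) / 2 < 1 \<and> q < (1 + q) / 2" if "0 \<le> q" "q < 1" for q :: real
      using that by auto
    note s0' = avg[OF q0 True, folded s0_def]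
    have s0: "0 < s0" "s0 < 1" "?q < s0" using s0' by auto
    have "eventually (\<lambda>k. g_fun W k (\<A> k) s0 < s0) sequentially"
      using order_tendstoD(2)[OF g_lim[OF s0(1,2)] s0(3)] .
    then obtain K where K: "\<And>k. k \<ge> K \<Longrightarrow> g_fun W k (\<A> k) s0 < s0"
      unfolding eventually_sequentially by blast
    show ?thesis
    proof (intro exI[of _ K] allI impI)
      fix k assume kK: "K < k"
      let ?U = "\<A> k"
      have k1: "1 \<le> k" using kK by auto
      have ne: "\<And>X. X \<in> ?U \<Longrightarrow> X \<noteq> {}" using A_sets by blast
      define x where "x n = measure (gw_space W) (UNIV - Dset ?U k n)" for n
      have x_le: "x n \<le> s0" for n
      proof (induction n)
        case 0 then show ?case using s0 by (simp add: x_def)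
      next
        case (Suc n)
        have "x (Suc n) = g_fun W k ?U (x n)" unfolding x_def by (rule Dset_rec)
        also have "\<dots> \<le> g_fun W k ?U s0"
          using Suc s0 by (intro g_mono) (auto simp: x_def)
        also have "\<dots> < s0" using K kK by auto
        finally show ?case by simp
      qed
      have D_ge: "1 - s0 \<le> measure (gw_space W) (Dset ?U k n)" for n
        using x_le[of n] P.prob_compl[OF Dset_sets[of ?U k n W]] unfolding x_def by simp
      have lim: "(\<lambda>n. measure (gw_space W) (Dset ?U k n)) \<longlonglongrightarrow> measure (gw_space W) (Hset ?U k)"
        unfolding Hset_def using Dset_sets Dset_decseq by (intro P.finite_Lim_measure_decseq) auto
      have H_ge: "1 - s0 \<le> measure (gw_space W) (Hset ?U k)"
        using lim D_ge by (intro LIMSEQ_le_const) auto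
      have E_ge: "measure (gw_space W) (Hset ?U k) \<le> measure (gw_space W) (Eset ?U k)"
        using Hset_Eset Eset_sets by (intro P.finite_measure_mono) auto
      let ?y = "measure (gw_space W) (UNIV - Eset ?U k)"
      have y_eq: "?y = 1 - measure (gw_space W) (Eset ?U k)" using P.prob_compl[OF Eset_sets] by simp
      have y1: "?y < 1" using y_eq H_ge E_ge s0 by linarith
      have y_le_q: "?y \<le> ?q"
      proof (cases "?y = 0")
        case True then show ?thesis using q0 by simp
      next
        case False
        then have y0: "0 < ?y" by (simp add: less_le)
        have sm: "strict_mono (\<lambda>n::nat. k * n)" using k1 by (intro strict_monoI) auto
        have "((\<lambda>j. g_fun W j (\<A> j) ?y) \<circ> (\<lambda>n. k * n)) \<longlonglongrightarrow> ?q"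
          using LIMSEQ_subseq_LIMSEQ[OF g_lim[OF y0 y1] sm] .
        then have lim2: "(\<lambda>n. g_fun W (k * n) (\<A> (k * n)) ?y) \<longlonglongrightarrow> ?q" by (simp add: o_def)
        have "?y \<le> g_fun W (k * n) (\<A> (k * n)) ?y" for n
          using Eset_bound[of "\<A> (k * n)" W ?U k n] A_sets by blast
        then show ?thesis using lim2 by (intro LIMSEQ_le_const) auto
      qed
      have XE: "?X \<subseteq> UNIV - Eset ?U k" using extinct_not_Eset[OF ne k1] by auto
      have "measure (gw_space W) ((UNIV - Eset ?U k) - ?X) = ?y - ?q"
        using XE Xs compl[OF Eset_sets] by (intro P.finite_measure_Diff) auto
      then have "measure (gw_space W) ((UNIV - Eset ?U k) - ?X) = 0"
        using y_le_q measure_nonneg[of "gw_space W" "(UNIV - Eset ?U k) - ?X"] by linarith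
      then have N: "(UNIV - Eset ?U k) - ?X \<in> null_sets (gw_space W)"
        using null Xs compl[OF Eset_sets] by blast
      show "AE \<omega> in gw_space W. \<not> extinct \<omega> \<longrightarrow>
           infinite {v \<in> compressed_tree k \<omega>. has_subtree (\<A> k) (desc_tree (compressed_tree k \<omega>) v)}"
      proof (rule AE_I'[OF N], rule subsetI)
        fix \<omega> assume "\<omega> \<in> {\<omega> \<in> space (gw_space W). \<not> (\<not> extinct \<omega> \<longrightarrow>
           infinite {v \<in> compressed_tree k \<omega>. has_subtree (\<A> k) (desc_tree (compressed_tree k \<omega>) v)})}"
        then have fin: "finite {v \<in> compressed_tree k \<omega>. has_subtree (\<A> k) (desc_tree (compressed_tree k \<omega>) v)}"
          and ne_ext: "\<not> extinct \<omega>" by auto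
        show "\<omega> \<in> UNIV - Eset ?U k - ?X"
        proof -
          have "\<omega> \<notin> Eset ?U k"
          proof
            assume "\<omega> \<in> Eset ?U k"
            then obtain ws0 where "ws0 \<in> compressed_tree k \<omega>" "sh (concat ws0) \<omega> \<in> Hset ?U k"
              using Eset_vertex by blast
            then show False using E_infinite[OF ne] fin by blast
          qed
          then show ?thesis using ne_ext by auto
        qed
      qed
    qed
  qed
qed


end
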